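(* For every nonempty finite multiset $\mathcal{C}$ of integers $\ge 2$, \[ \#\mathrm{ST}_C(\mathcal{C})=\sum_{c\in\mathcal{C}} c\cdot \#\mathrm{ST}_W(\mathcal{C}-\{c\},c). \]
   Context: Genomes: finite directed graphs with pairwise distinct edge labels, every vertex of total degree $1$ or $2$; each edge $X$ has extremities $X^t,X^h$; degree-$2$ vertices are adjacencies (identified with $2$-element sets of extremities), degree-$1$ vertices are telomeres. Single Cut-and-Join operations: cut ($\{a,b\}\mapsto\{a\},\{b\}$), join ($\{a\},\{b\}\mapsto\{a,b\}$), cut-join ($\{a,b\},\{c\}\mapsto\{a,c\},\{b\}$). The adjacency graph $A(G_1,G_2)$ is the bipartite multigraph on $V_1$ (adjacencies and telomeres of $G_1$) and $V_2$ (those of $G_2$) with $|X\cap Y|$ edges between $X\in V_1$, $Y\in V_2$; operations on $G_1$ act on $V_1$-vertices. Components: $W$-shaped (even path, endpoints in $V_1$), $M$-shaped (even path, endpoints in $V_2$), $N$-shaped (odd path), crown (cycle). Size of $B$: $\lfloor|E(B)|/2\rfloor$; trivial crown = size-$1$ crown, nontrivial crown = size $\ge2$. For a set $\mathcal{B}'$ of components, $d(\mathcal{B}')=\sum_{B\in\mathcal{B}'}\mathrm{size}(B)-\#\{\text{trivial crowns}\}+\#\{\text{nontrivial crowns}\}$. In a sequence of $d(\mathcal{B}')$ operations acting only on $\mathcal{B}'$ turning it into trivial components, $A\sim B$ if $A=B$ or some cut-join joins an extremity originally in $A$ with one originally in $B$; "sort together" is the transitive closure. $\#\mathrm{ST}(\mathcal{B}')$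 counts such sequences in which all of $\mathcal{B}'$ sorts together; it depends only on types and sizes. For a finite multiset $\mathcal{C}$ of integers $\ge2$: $\#\mathrm{ST}_C(\mathcal{C})$ (for $\mathcal{C}\ne\emptyset$) is $\#\mathrm{ST}$ of a set of nontrivial crowns with sizes given by $\mathcal{C}$; $\#\mathrm{ST}_W(\mathcal{C},w)$ ($w\ge1$) is $\#\mathrm{ST}$ of such crowns together with one $W$-shaped component of size $w$. Sums over $c\in\mathcal{C}$ count multiplicity; $\mathcal{C}-\{c\}$ removes one copy of $c$. *)

theory Defs
  imports Main "HOL-Library.Multiset"
begin

(* Extremities are natural numbers; a genome on a finite extremity set is the set of its
   vertices, i.e. a partition of the extremities into blocks of size 1 (telomeres) or
   2 (adjacencies).  Gene labels play no role for SCJ counting. *)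

definition is_genome :: "nat set \<Rightarrow> nat set set \<Rightarrow> bool" where
  "is_genome E G \<longleftrightarrow> finite E \<and> \<Union>G = E \<and>
     (\<forall>X\<in>G. card X = 1 \<or> card X = 2) \<and>
     (\<forall>X\<in>G. \<forall>Y\<in>G. X \<noteq> Y \<longrightarrow> X \<inter> Y = {})"

definition adj_link :: "nat set set \<Rightarrow> nat set set \<Rightarrow> (nat \<times> nat) set" where
  "adj_link G1 G2 = {(x, y). \<exists>X \<in> G1 \<union> G2. x \<in> X \<and> y \<in> X}"

(* components, each represented by its set of edges (extremities) *)
definition comps :: "nat set set \<Rightarrow> nat set set \<Rightarrow> nat set set" where
  "comps G1 G2 = (\<lambda>x. (adj_link G1 G2)\<^sup>* `` {x}) ` (\<Union>G1)"

definition telos :: "nat set set \<Rightarrow> nat set \<Rightarrow> nat set set" where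
  "telos G S = {X \<in> G. X \<subseteq> S \<and> card X = 1}"

definition comp_size :: "nat set \<Rightarrow> nat" where
  "comp_size S = card S div 2"

definition is_crown :: "nat set set \<Rightarrow> nat set set \<Rightarrow> nat set \<Rightarrow> bool" where
  "is_crown G1 G2 S \<longleftrightarrow> telos G1 S = {} \<and> telos G2 S = {}"

definition is_W :: "nat set set \<Rightarrow> nat set set \<Rightarrow> nat set \<Rightarrow> bool" where
  "is_W G1 G2 S \<longleftrightarrow> card (telos G1 S) = 2 \<and> telos G2 S = {}"

definition is_M :: "nat set set \<Rightarrow> nat set set \<Rightarrow> nat set \<Rightarrow> bool" where
  "is_M G1 G2 S \<longleftrightarrow> telos G1 S = {} \<and> card (telos G2 S) = 2"

definition is_N :: "nat set set \<Rightarrow> nat set set \<Rightarrow> nat set \<Rightarrow> bool" where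
  "is_N G1 G2 S \<longleftrightarrow> card (telos G1 S) = 1 \<and> card (telos G2 S) = 1"

definition trivial_crown :: "nat set set \<Rightarrow> nat set set \<Rightarrow> nat set \<Rightarrow> bool" where
  "trivial_crown G1 G2 S \<longleftrightarrow> is_crown G1 G2 S \<and> comp_size S = 1"

definition nontrivial_crown :: "nat set set \<Rightarrow> nat set set \<Rightarrow> nat set \<Rightarrow> bool" where
  "nontrivial_crown G1 G2 S \<longleftrightarrow> is_crown G1 G2 S \<and> comp_size S \<ge> 2"

definition trivial_comp :: "nat set set \<Rightarrow> nat set set \<Rightarrow> nat set \<Rightarrow> bool" where
  "trivial_comp G1 G2 S \<longleftrightarrow> trivial_crown G1 G2 S \<or> (is_N G1 G2 S \<and> comp_size S = 0)"

(* d(B') for B' = the set of all components of A(G1,G2) *)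
definition dist :: "nat set set \<Rightarrow> nat set set \<Rightarrow> nat" where
  "dist G1 G2 = (\<Sum>S\<in>comps G1 G2. comp_size S)
      - card {S \<in> comps G1 G2. trivial_crown G1 G2 S}
      + card {S \<in> comps G1 G2. nontrivial_crown G1 G2 S}"

definition cut_step :: "nat set set \<Rightarrow> nat set set \<Rightarrow> bool" where
  "cut_step G G' \<longleftrightarrow> (\<exists>a b. a \<noteq> b \<and> {a, b} \<in> G \<and> G' = (G - {{a, b}}) \<union> {{a}, {b}})"

definition join_step :: "nat set set \<Rightarrow> nat set set \<Rightarrow> bool" where
  "join_step G G' \<longleftrightarrow> (\<exists>a b. a \<noteq> b \<and> {a} \<in> G \<and> {b} \<in> G \<and> G' = (G - {{a}, {b}}) \<union> {{a, b}})"

definition cutjoin_joins :: "nat set set \<Rightarrow> nat set set \<Rightarrow> nat \<Rightarrow> nat \<Rightarrow> bool" where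
  "cutjoin_joins G G' a c \<longleftrightarrow> (\<exists>b. a \<noteq> b \<and> c \<noteq> a \<and> c \<noteq> b \<and> {a, b} \<in> G \<and> {c} \<in> G \<and>
       G' = (G - {{a, b}, {c}}) \<union> {{a, c}, {b}})"

definition scj_step :: "nat set set \<Rightarrow> nat set set \<Rightarrow> bool" where
  "scj_step G G' \<longleftrightarrow> cut_step G G' \<or> join_step G G' \<or> (\<exists>a c. cutjoin_joins G G' a c)"

(* hs = list of the successive genomes after each operation, starting from G1 *)
definition sorting_seq :: "nat set set \<Rightarrow> nat set set \<Rightarrow> nat set set list \<Rightarrow> bool" where
  "sorting_seq G1 G2 hs \<longleftrightarrow> length hs = dist G1 G2 \<and>
     (\<forall>i < length hs. scj_step ((G1 # hs) ! i) ((G1 # hs) ! Suc i)) \<and>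
     (\<forall>S \<in> comps (last (G1 # hs)) G2. trivial_comp (last (G1 # hs)) G2 S)"

(* A ~ B (A \<noteq> B case): some cut-join joins an extremity originally in A with one originally in B *)
definition joined_rel :: "nat set set \<Rightarrow> nat set set \<Rightarrow> nat set set list \<Rightarrow> (nat set \<times> nat set) set" where
  "joined_rel G1 G2 hs = {(A, B). A \<in> comps G1 G2 \<and> B \<in> comps G1 G2 \<and>
      (\<exists>i < length hs. \<exists>a c. cutjoin_joins ((G1 # hs) ! i) ((G1 # hs) ! Suc i) a c \<and>
          ((a \<in> A \<and> c \<in> B) \<or> (a \<in> B \<and> c \<in> A)))}"

definition all_sort_together :: "nat set set \<Rightarrow> nat set set \<Rightarrow> nat set set list \<Rightarrow> bool" where
  "all_sort_together G1 G2 hs \<longleftrightarrow>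
     (\<forall>A \<in> comps G1 G2. \<forall>B \<in> comps G1 G2. (A, B) \<in> (joined_rel G1 G2 hs)\<^sup>*)"

(* #ST of the set of all components of A(G1,G2) *)
definition countST :: "nat set set \<Rightarrow> nat set set \<Rightarrow> nat" where
  "countST G1 G2 = card {hs. sorting_seq G1 G2 hs \<and> all_sort_together G1 G2 hs}"

definition crown1 :: "nat \<Rightarrow> nat \<Rightarrow> nat set set" where
  "crown1 off k = {{off + 2*i, off + 2*i + 1} | i. i < k}"

definition crown2 :: "nat \<Rightarrow> nat \<Rightarrow> nat set set" where
  "crown2 off k = {{off + 2*i + 1, off + (2*i + 2) mod (2*k)} | i. i < k}"

fun crowns1 :: "nat \<Rightarrow> nat list \<Rightarrow> nat set set" where
  "crowns1 off [] = {}"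
| "crowns1 off (k # ks) = crown1 off k \<union> crowns1 (off + 2*k) ks"

fun crowns2 :: "nat \<Rightarrow> nat list \<Rightarrow> nat set set" where
  "crowns2 off [] = {}"
| "crowns2 off (k # ks) = crown2 off k \<union> crowns2 (off + 2*k) ks"

(* W-shaped component of size w \<ge> 1 on extremities o .. o+2w-1 *)
definition W1 :: "nat \<Rightarrow> nat \<Rightarrow> nat set set" where
  "W1 off w = {{off}, {off + 2*w - 1}} \<union> {{off + 2*i - 1, off + 2*i} | i. 1 \<le> i \<and> i < w}"

definition W2 :: "nat \<Rightarrow> nat \<Rightarrow> nat set set" where
  "W2 off w = {{off + 2*i, off + 2*i + 1} | i. i < w}"

(* #ST_C(C): nontrivial crowns with sizes C *)
definition ST_C :: "nat multiset \<Rightarrow> nat" where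
  "ST_C C = countST (crowns1 0 (sorted_list_of_multiset C)) (crowns2 0 (sorted_list_of_multiset C))"

(* #ST_W(C, w): nontrivial crowns with sizes C plus one W-shaped component of size w *)
definition ST_W :: "nat multiset \<Rightarrow> nat \<Rightarrow> nat" where
  "ST_W C w = countST (W1 0 w \<union> crowns1 (2*w) (sorted_list_of_multiset C))
                      (W2 0 w \<union> crowns2 (2*w) (sorted_list_of_multiset C))"

end

theory Submission
  imports Defs
begin


definition ren :: "(nat \<Rightarrow> nat) \<Rightarrow> nat set set \<Rightarrow> nat set set" where
  "ren f G = (`) f ` G"

lemma inj_img: "inj f \<Longrightarrow> inj ((`) f)"
  by (simp add: inj_def inj_image_eq_iff)

lemma ren_Un: "ren f (A \<union> B) = ren f A \<union> ren f B" by (auto simp: ren_def)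

lemma ren_diff: "inj f \<Longrightarrow> ren f (A - B) = ren f A - ren f B"
  unfolding ren_def by (rule image_set_diff[OF inj_img])

lemma ren_inv: "bij f \<Longrightarrow> ren (inv f) (ren f G) = G"
  unfolding ren_def image_image by (simp add: bij_is_inj image_inv_f_f)

lemma ren_inv2: "bij f \<Longrightarrow> ren f (ren (inv f) G) = G"
  unfolding ren_def image_image
  by (simp add: bij_is_surj image_f_inv_f image_comp[symmetric] surj_f_inv_f bij_def)

lemma adj_link_ren: "adj_link (ren f G1) (ren f G2) = map_prod f f ` adj_link G1 G2"
  unfolding adj_link_def ren_def by (auto simp: image_iff)

lemma rtrancl_map_fwd:
  assumes "(x,y) \<in> R\<^sup>*" shows "(h x, h y) \<in> (map_prod h h ` R)\<^sup>*"
  using assms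
proof (induction rule: rtrancl_induct)
  case base then show ?case by simp
next
  case (step y z)
  have "(h y, h z) \<in> map_prod h h ` R" using step(2) by force
  then show ?case using step(3) by (meson rtrancl.rtrancl_into_rtrancl)
qed

lemma rtrancl_map_bwd:
  assumes "(u,v) \<in> (map_prod h h ` R)\<^sup>*" "inj h"
  shows "\<And>x. u = h x \<Longrightarrow> \<exists>y. v = h y \<and> (x,y) \<in> R\<^sup>*"
  using assms(1)
proof (induction rule: rtrancl_induct)
  case base then show ?case by auto
next
  case (step y z)
  then obtain y0 where y0: "y = h y0" "(x,y0) \<in> R\<^sup>*" by blast
  from step(2) obtain p q where "(p,q) \<in> R" "y = h p" "z = h q" by auto
  with y0 assms(2) have "p = y0" by (auto dest: injD)
  with \<open>(p,q) \<in> R\<close> y0 have "(x,q) \<in> R\<^sup>*" by (meson rtrancl.rtrancl_into_rtrancl)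
  then show ?case using \<open>z = h q\<close> by blast
qed

lemma rtrancl_map_iff: "inj h \<Longrightarrow> ((h x, h y) \<in> (map_prod h h ` R)\<^sup>*) = ((x,y) \<in> R\<^sup>*)"
  using rtrancl_map_bwd[of "h x" "h y" h R x] rtrancl_map_fwd[of x y R h]
  by (auto dest: injD)

lemma Image_map: "inj h \<Longrightarrow> (map_prod h h ` R)\<^sup>* `` {h x} = h ` (R\<^sup>* `` {x})"
  using rtrancl_map_bwd[of "h x" _ h R x] rtrancl_map_fwd[of x _ R h]
  by auto

lemma Union_ren: "\<Union>(ren f G) = f ` \<Union>G" by (auto simp: ren_def)

lemma comps_ren: "inj f \<Longrightarrow> comps (ren f G1) (ren f G2) = (`) f ` comps G1 G2"
  unfolding comps_def adj_link_ren Union_ren image_image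
  by (simp add: Image_map)

lemma card_ren: "inj f \<Longrightarrow> card (ren f T) = card T"
  unfolding ren_def by (rule card_image) (meson inj_img inj_on_subset subset_UNIV)

lemma telos_ren: "inj f \<Longrightarrow> telos (ren f G) (f ` S) = ren f (telos G S)"
  unfolding telos_def ren_def
  by (auto simp: card_image inj_image_subset_iff inj_on_subset[of f UNIV])

lemma comp_size_ren: "inj f \<Longrightarrow> comp_size (f ` S) = comp_size S"
  by (simp add: comp_size_def card_image inj_on_subset[of f UNIV])

lemma ren_empty_iff: "(ren f T = {}) = (T = {})" by (simp add: ren_def)

lemma is_crown_ren: "inj f \<Longrightarrow> is_crown (ren f G1) (ren f G2) (f ` S) = is_crown G1 G2 S"
  by (simp add: is_crown_def telos_ren ren_empty_iff)
lemma is_N_ren: "inj f \<Longrightarrow> is_N (ren f G1) (ren f G2) (f ` S) = is_N G1 G2 S"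
  by (simp add: is_N_def telos_ren card_ren)
lemma trivial_crown_ren: "inj f \<Longrightarrow> trivial_crown (ren f G1) (ren f G2) (f ` S) = trivial_crown G1 G2 S"
  by (simp add: trivial_crown_def is_crown_ren comp_size_ren)
lemma nontrivial_crown_ren: "inj f \<Longrightarrow> nontrivial_crown (ren f G1) (ren f G2) (f ` S) = nontrivial_crown G1 G2 S"
  by (simp add: nontrivial_crown_def is_crown_ren comp_size_ren)
lemma trivial_comp_ren: "inj f \<Longrightarrow> trivial_comp (ren f G1) (ren f G2) (f ` S) = trivial_comp G1 G2 S"
  by (simp add: trivial_comp_def trivial_crown_ren is_N_ren comp_size_ren)

lemma filter_img: "inj f \<Longrightarrow> (\<And>S. P' (f ` S) = P S) \<Longrightarrow>
   card {S \<in> (`) f ` CS. P' S} = card {S \<in> CS. P S}"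
proof -
  assume i: "inj f" and p: "\<And>S. P' (f ` S) = P S"
  have "{S \<in> (`) f ` CS. P' S} = (`) f ` {S \<in> CS. P S}" using p by auto
  then show ?thesis using card_image inj_img[OF i]
    by (metis (no_types, lifting) inj_on_subset subset_UNIV)
qed

lemma dist_ren: "inj f \<Longrightarrow> dist (ren f G1) (ren f G2) = dist G1 G2"
proof -
  assume i: "inj f"
  have s: "(\<Sum>S\<in>(`) f ` comps G1 G2. comp_size S) = (\<Sum>S\<in>comps G1 G2. comp_size S)"
    by (subst sum.reindex) (auto simp: comp_size_ren[OF i] intro: inj_on_subset[OF inj_img[OF i]])
  show ?thesis unfolding dist_def comps_ren[OF i] s
    using filter_img[OF i, of "trivial_crown (ren f G1) (ren f G2)" "trivial_crown G1 G2"]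
          filter_img[OF i, of "nontrivial_crown (ren f G1) (ren f G2)" "nontrivial_crown G1 G2"]
    by (simp add: trivial_crown_ren[OF i] nontrivial_crown_ren[OF i])
qed

lemma ren_insert: "ren f (insert X G) = insert (f ` X) (ren f G)" by (simp add: ren_def)
lemma ren_empty: "ren f {} = {}" by (simp add: ren_def)
lemma mem_ren: "inj f \<Longrightarrow> (f ` X \<in> ren f G) = (X \<in> G)"
  by (simp add: ren_def inj_image_mem_iff[OF inj_img])

lemma cut_step_ren: "inj f \<Longrightarrow> cut_step G G' \<Longrightarrow> cut_step (ren f G) (ren f G')"
  unfolding cut_step_def
proof (elim exE conjE)
  fix a b assume i: "inj f" and h: "a \<noteq> b" "{a, b} \<in> G" "G' = G - {{a, b}} \<union> {{a}, {b}}"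
  have "ren f G' = ren f G - {{f a, f b}} \<union> {{f a}, {f b}}"
    using h(3) by (simp add: ren_Un ren_diff[OF i] ren_insert ren_empty)
  moreover have "f a \<noteq> f b" using i h(1) by (auto dest: injD)
  moreover have "{f a, f b} \<in> ren f G" using mem_ren[OF i, of "{a,b}"] h(2) by simp
  ultimately show "\<exists>a b. a \<noteq> b \<and> {a, b} \<in> ren f G \<and> ren f G' = ren f G - {{a, b}} \<union> {{a}, {b}}" by blast
qed

lemma join_step_ren: "inj f \<Longrightarrow> join_step G G' \<Longrightarrow> join_step (ren f G) (ren f G')"
  unfolding join_step_def
proof (elim exE conjE)
  fix a b assume i: "inj f" and h: "a \<noteq> b" "{a} \<in> G" "{b} \<in> G" "G' = G - {{a}, {b}} \<union> {{a, b}}"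
  have "ren f G' = ren f G - {{f a}, {f b}} \<union> {{f a, f b}}"
    using h(4) by (simp add: ren_Un ren_diff[OF i] ren_insert ren_empty)
  moreover have "f a \<noteq> f b" using i h(1) by (auto dest: injD)
  moreover have "{f a} \<in> ren f G" using mem_ren[OF i, of "{a}"] h(2) by simp
  moreover have "{f b} \<in> ren f G" using mem_ren[OF i, of "{b}"] h(3) by simp
  ultimately show "\<exists>a b. a \<noteq> b \<and> {a} \<in> ren f G \<and> {b} \<in> ren f G \<and> ren f G' = ren f G - {{a}, {b}} \<union> {{a, b}}" by blast
qed

lemma cutjoin_ren: "inj f \<Longrightarrow> cutjoin_joins G G' a c \<Longrightarrow> cutjoin_joins (ren f G) (ren f G') (f a) (f c)"
  unfolding cutjoin_joins_def
proof (elim exE conjE)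
  fix b assume i: "inj f" and h: "a \<noteq> b" "c \<noteq> a" "c \<noteq> b" "{a, b} \<in> G" "{c} \<in> G"
     "G' = G - {{a, b}, {c}} \<union> {{a, c}, {b}}"
  have "ren f G' = ren f G - {{f a, f b}, {f c}} \<union> {{f a, f c}, {f b}}"
    using h(6) by (simp add: ren_Un ren_diff[OF i] ren_insert ren_empty)
  moreover have "f a \<noteq> f b" "f c \<noteq> f a" "f c \<noteq> f b" using i h(1-3) by (auto dest: injD)
  moreover have "{f a, f b} \<in> ren f G" using mem_ren[OF i, of "{a,b}"] h(4) by simp
  moreover have "{f c} \<in> ren f G" using mem_ren[OF i, of "{c}"] h(5) by simp
  ultimately show "\<exists>b. f a \<noteq> b \<and> f c \<noteq> f a \<and> f c \<noteq> b \<and> {f a, b} \<in> ren f G \<and> {f c} \<in> ren f G \<and>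
        ren f G' = ren f G - {{f a, b}, {f c}} \<union> {{f a, f c}, {b}}" by blast
qed

lemma scj_step_ren: "inj f \<Longrightarrow> scj_step G G' \<Longrightarrow> scj_step (ren f G) (ren f G')"
  unfolding scj_step_def using cut_step_ren join_step_ren cutjoin_ren by blast

lemma sorting_seq_ren: "inj f \<Longrightarrow> sorting_seq G1 G2 hs \<Longrightarrow>
   sorting_seq (ren f G1) (ren f G2) (map (ren f) hs)"
proof -
  assume i: "inj f" and s: "sorting_seq G1 G2 hs"
  have e: "ren f G1 # map (ren f) hs = map (ren f) (G1 # hs)" by simp
  show ?thesis unfolding sorting_seq_def e
  proof (intro conjI allI impI ballI)
    show "length (map (ren f) hs) = dist (ren f G1) (ren f G2)"
      using s by (simp add: sorting_seq_def dist_ren[OF i])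
  next
    fix j assume "j < length (map (ren f) hs)"
    then show "scj_step (map (ren f) (G1 # hs) ! j) (map (ren f) (G1 # hs) ! Suc j)"
      using s scj_step_ren[OF i] unfolding sorting_seq_def
      by (metis length_Cons length_map Suc_mono nth_map less_SucI)
  next
    fix S assume "S \<in> comps (last (map (ren f) (G1 # hs))) (ren f G2)"
    have lm: "last (map (ren f) (G1 # hs)) = ren f (last (G1 # hs))" by (rule last_map) simp
    from \<open>S \<in> _\<close> have "S \<in> comps (ren f (last (G1 # hs))) (ren f G2)" by (simp only: lm)
    then obtain S0 where "S = f ` S0" "S0 \<in> comps (last (G1 # hs)) G2"
      by (auto simp: comps_ren[OF i])
    then show "trivial_comp (last (map (ren f) (G1 # hs))) (ren f G2) S"
      using s by (simp only: lm sorting_seq_def trivial_comp_ren[OF i])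
  qed
qed

lemma joined_rel_ren: "inj f \<Longrightarrow> (A, B) \<in> joined_rel G1 G2 hs \<Longrightarrow>
   (f ` A, f ` B) \<in> joined_rel (ren f G1) (ren f G2) (map (ren f) hs)"
proof -
  assume i: "inj f" and h: "(A, B) \<in> joined_rel G1 G2 hs"
  have e: "ren f G1 # map (ren f) hs = map (ren f) (G1 # hs)" by simp
  from h obtain j a c where j: "A \<in> comps G1 G2" "B \<in> comps G1 G2" "j < length hs"
    "cutjoin_joins ((G1 # hs) ! j) ((G1 # hs) ! Suc j) a c"
    "(a \<in> A \<and> c \<in> B) \<or> (a \<in> B \<and> c \<in> A)"
    unfolding joined_rel_def by blast
  have "cutjoin_joins (map (ren f) (G1 # hs) ! j) (map (ren f) (G1 # hs) ! Suc j) (f a) (f c)"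
  proof -
    have "map (ren f) (G1 # hs) ! j = ren f ((G1#hs)!j)" by (rule nth_map) (use j(3) in simp)
    moreover have "map (ren f) (G1 # hs) ! Suc j = ren f ((G1#hs)! Suc j)" by (rule nth_map) (use j(3) in simp)
    ultimately show ?thesis using cutjoin_ren[OF i j(4)] by (simp only:)
  qed
  moreover have "(f a \<in> f ` A \<and> f c \<in> f ` B) \<or> (f a \<in> f ` B \<and> f c \<in> f ` A)" using j(5) by blast
  moreover have "f ` A \<in> comps (ren f G1) (ren f G2)" "f ` B \<in> comps (ren f G1) (ren f G2)"
    using j(1,2) by (auto simp: comps_ren[OF i])
  ultimately show ?thesis unfolding joined_rel_def e using j(3) length_map
    by (smt (verit, best) case_prodI length_Cons mem_Collect_eq)
qed

lemma rtrancl_map_gen: "(x, y) \<in> r\<^sup>* \<Longrightarrow> (\<And>u v. (u, v) \<in> r \<Longrightarrow> (g u, g v) \<in> s) \<Longrightarrow> (g x, g y) \<in> s\<^sup>*"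
  by (induction rule: rtrancl_induct) (auto intro: rtrancl_into_rtrancl)

lemma ast_ren: "inj f \<Longrightarrow> all_sort_together G1 G2 hs \<Longrightarrow>
   all_sort_together (ren f G1) (ren f G2) (map (ren f) hs)"
proof -
  assume i: "inj f" and h: "all_sort_together G1 G2 hs"
  show ?thesis unfolding all_sort_together_def
  proof (intro ballI)
    fix A' B' assume "A' \<in> comps (ren f G1) (ren f G2)" "B' \<in> comps (ren f G1) (ren f G2)"
    then obtain A B where ab: "A' = f ` A" "B' = f ` B" "A \<in> comps G1 G2" "B \<in> comps G1 G2"
      by (auto simp: comps_ren[OF i])
    then have "(A, B) \<in> (joined_rel G1 G2 hs)\<^sup>*" using h unfolding all_sort_together_def by blast
    from rtrancl_map_gen[OF this, where g="(`) f" and s="joined_rel (ren f G1) (ren f G2) (map (ren f) hs)"]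
    show "(A', B') \<in> (joined_rel (ren f G1) (ren f G2) (map (ren f) hs))\<^sup>*"
      using joined_rel_ren[OF i] ab by blast
  qed
qed

definition seqs :: "nat set set \<Rightarrow> nat set set \<Rightarrow> nat set set list set" where
  "seqs G1 G2 = {hs. sorting_seq G1 G2 hs \<and> all_sort_together G1 G2 hs}"

lemma seqs_ren_fwd: "inj f \<Longrightarrow> hs \<in> seqs G1 G2 \<Longrightarrow> map (ren f) hs \<in> seqs (ren f G1) (ren f G2)"
  by (simp add: seqs_def sorting_seq_ren ast_ren)

lemma seqs_ren: "bij f \<Longrightarrow> seqs (ren f G1) (ren f G2) = map (ren f) ` seqs G1 G2"
proof
  assume b: "bij f"
  show "map (ren f) ` seqs G1 G2 \<subseteq> seqs (ren f G1) (ren f G2)"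
    using seqs_ren_fwd[OF bij_is_inj[OF b]] by blast
  show "seqs (ren f G1) (ren f G2) \<subseteq> map (ren f) ` seqs G1 G2"
  proof
    fix hs assume "hs \<in> seqs (ren f G1) (ren f G2)"
    then have "map (ren (inv f)) hs \<in> seqs G1 G2"
      using seqs_ren_fwd[OF bij_is_inj[OF bij_imp_bij_inv[OF b]], of hs "ren f G1" "ren f G2"]
      by (simp add: ren_inv[OF b])
    moreover have "hs = map (ren f) (map (ren (inv f)) hs)"
      by (simp add: ren_inv2[OF b] comp_def)
    ultimately show "hs \<in> map (ren f) ` seqs G1 G2" by blast
  qed
qed

lemma countST_ren: "bij f \<Longrightarrow> countST (ren f G1) (ren f G2) = countST G1 G2"
proof -
  assume b: "bij f"
  have "inj (map (ren f))"
    by (rule inj_mapI) (metis b ren_inv injI)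
  then show ?thesis
    unfolding countST_def seqs_def[symmetric] seqs_ren[OF b]
    using card_image[OF inj_on_subset[OF \<open>inj (map (ren f))\<close> subset_UNIV]] by simp
qed



definition cutX :: "nat set \<Rightarrow> nat set set \<Rightarrow> nat set set" where
  "cutX X G = (G - {X}) \<union> (\<lambda>x. {x}) ` X"

lemma cutX_pair: "cutX {a,b} G = G - {{a,b}} \<union> {{a},{b}}"
  by (simp add: cutX_def)

lemma scj_union: "scj_step G G' \<Longrightarrow> \<Union>G' \<subseteq> \<Union>G"
  unfolding scj_step_def cut_step_def join_step_def cutjoin_joins_def by blast

lemma seq_union:
  assumes "\<forall>i < length hs. scj_step ((G1 # hs) ! i) ((G1 # hs) ! Suc i)"
  shows "i \<le> length hs \<Longrightarrow> \<Union>((G1 # hs) ! i) \<subseteq> \<Union>G1"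
proof (induction i)
  case 0 then show ?case by simp
next
  case (Suc i)
  then have "scj_step ((G1 # hs) ! i) ((G1 # hs) ! Suc i)" using assms by simp
  with Suc show ?case using scj_union by fastforce
qed

lemma finite_seqs: "finite (\<Union>G1) \<Longrightarrow> finite (seqs G1 G2)"
proof -
  assume f: "finite (\<Union>G1)"
  have "seqs G1 G2 \<subseteq> {hs. set hs \<subseteq> Pow (Pow (\<Union>G1)) \<and> length hs = dist G1 G2}"
  proof
    fix hs assume "hs \<in> seqs G1 G2"
    then have s: "sorting_seq G1 G2 hs" by (simp add: seqs_def)
    have "set hs \<subseteq> Pow (Pow (\<Union>G1))"
    proof
      fix H assume "H \<in> set hs"
      then obtain i where i: "i < length hs" "H = hs ! i" by (metis in_set_conv_nth)
      have "\<Union>((G1 # hs) ! Suc i) \<subseteq> \<Union>G1"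
        by (rule seq_union) (use s i in \<open>auto simp: sorting_seq_def\<close>)
      then show "H \<in> Pow (Pow (\<Union>G1))" using i by auto
    qed
    then show "hs \<in> {hs. set hs \<subseteq> Pow (Pow (\<Union>G1)) \<and> length hs = dist G1 G2}"
      using s by (simp add: sorting_seq_def)
  qed
  moreover have "finite {hs. set hs \<subseteq> Pow (Pow (\<Union>G1)) \<and> length hs = dist G1 G2}"
    by (rule finite_lists_length_eq) (simp add: f)
  ultimately show ?thesis by (rule finite_subset)
qed

lemma scj_no_tel: "\<forall>Y\<in>G. card Y = 2 \<Longrightarrow> scj_step G G' \<Longrightarrow> \<exists>X\<in>G. G' = cutX X G"
proof -
  assume c: "\<forall>Y\<in>G. card Y = 2" "scj_step G G'"
  have nj: "\<not> join_step G G'"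
  proof
    assume "join_step G G'"
    then obtain a where "{a} \<in> G" unfolding join_step_def by blast
    then show False using c(1) by fastforce
  qed
  have ncj: "\<not> cutjoin_joins G G' a b" for a b
  proof
    assume "cutjoin_joins G G' a b"
    then have "{b} \<in> G" unfolding cutjoin_joins_def by blast
    then show False using c(1) by fastforce
  qed
  then have "cut_step G G'" using c(2) nj unfolding scj_step_def by blast
  then obtain a b where ab: "{a, b} \<in> G" "G' = G - {{a, b}} \<union> {{a}, {b}}"
    unfolding cut_step_def by blast
  then have "G' = cutX {a,b} G" by (simp only: cutX_pair)
  then show ?thesis using ab(1) by blast
qed

lemma cut_cutX: "X \<in> G \<Longrightarrow> card X = 2 \<Longrightarrow> cut_step G (cutX X G)"
proof -
  assume "X \<in> G" "card X = 2"
  then obtain a b where "X = {a,b}" "a \<noteq> b" by (auto simp: card_2_iff)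
  then show ?thesis unfolding cut_step_def using \<open>X \<in> G\<close> cutX_pair[of a b G] by blast
qed

lemma cutX_inj: "\<forall>Y\<in>G. card Y = 2 \<Longrightarrow> X \<in> G \<Longrightarrow> Y \<in> G \<Longrightarrow> cutX X G = cutX Y G \<Longrightarrow> X = Y"
proof (rule ccontr)
  assume c: "\<forall>Y\<in>G. card Y = 2" "X \<in> G" "Y \<in> G" "cutX X G = cutX Y G" "X \<noteq> Y"
  have "Y \<in> cutX X G" using c(3,5) by (simp add: cutX_def)
  moreover have "Y \<notin> cutX Y G"
  proof
    assume "Y \<in> cutX Y G"
    then obtain y where "Y = {y}" by (auto simp: cutX_def)
    then show False using c(1,3) by auto
  qed
  ultimately show False using c(4) by simp
qed

lemma no_cutjoin: "\<forall>Y\<in>G. card Y = 2 \<Longrightarrow> \<not> cutjoin_joins G G' a c"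
proof
  assume "\<forall>Y\<in>G. card Y = 2" "cutjoin_joins G G' a c"
  then have "{c} \<in> G" unfolding cutjoin_joins_def by blast
  then show False using \<open>\<forall>Y\<in>G. card Y = 2\<close> by fastforce
qed

lemma cons_seqs:
  assumes c2: "\<forall>Y\<in>G1. card Y = 2" and X: "X \<in> G1"
    and cc: "comps (cutX X G1) G2 = comps G1 G2"
    and dd: "dist G1 G2 = Suc (dist (cutX X G1) G2)"
  shows "(cutX X G1 # hs \<in> seqs G1 G2) = (hs \<in> seqs (cutX X G1) G2)"
proof -
  let ?G = "cutX X G1"
  have st: "scj_step G1 ?G" using cut_cutX[OF X] c2 X by (simp add: scj_step_def)
  have ss: "sorting_seq G1 G2 (?G # hs) = sorting_seq ?G G2 hs"
    unfolding sorting_seq_def dd using st by (simp add: All_less_Suc2)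
  have jr: "joined_rel G1 G2 (?G # hs) = joined_rel ?G G2 hs"
    unfolding joined_rel_def cc using no_cutjoin[OF c2] by (simp add: Ex_less_Suc2)
  show ?thesis unfolding seqs_def all_sort_together_def
    by (simp add: ss jr cc)
qed

lemma decomp:
  assumes fin: "finite G1" "finite (\<Union>G1)"
    and c2: "\<forall>Y\<in>G1. card Y = 2"
    and d0: "dist G1 G2 \<noteq> 0"
    and hc: "\<And>X. X \<in> G1 \<Longrightarrow> comps (cutX X G1) G2 = comps G1 G2 \<and> dist G1 G2 = Suc (dist (cutX X G1) G2)"
  shows "countST G1 G2 = (\<Sum>X\<in>G1. countST (cutX X G1) G2)"
proof -
  have eq: "seqs G1 G2 = (\<Union>X\<in>G1. (Cons (cutX X G1)) ` seqs (cutX X G1) G2)"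
  proof
    show "seqs G1 G2 \<subseteq> (\<Union>X\<in>G1. (Cons (cutX X G1)) ` seqs (cutX X G1) G2)"
    proof
      fix hs assume h: "hs \<in> seqs G1 G2"
      then have "length hs \<noteq> 0" using d0 by (simp add: seqs_def sorting_seq_def)
      then obtain G' hs' where hs: "hs = G' # hs'" by (cases hs) auto
      then have "scj_step G1 G'" using h by (auto simp: seqs_def sorting_seq_def)
      then obtain X where X: "X \<in> G1" "G' = cutX X G1" using scj_no_tel[OF c2] by blast
      then have "hs' \<in> seqs (cutX X G1) G2" using cons_seqs[OF c2 X(1)] hc[OF X(1)] h hs by simp
      then show "hs \<in> (\<Union>X\<in>G1. (Cons (cutX X G1)) ` seqs (cutX X G1) G2)" using X hs by blast
    qed
    show "(\<Union>X\<in>G1. (Cons (cutX X G1)) ` seqs (cutX X G1) G2) \<subseteq> seqs G1 G2"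
      using cons_seqs[OF c2] hc by blast
  qed
  have fin2: "\<And>X. X \<in> G1 \<Longrightarrow> finite (\<Union>(cutX X G1))"
    using fin(2) by (rule finite_subset[rotated]) (auto simp: cutX_def)
  have "card (seqs G1 G2) = (\<Sum>X\<in>G1. card ((Cons (cutX X G1)) ` seqs (cutX X G1) G2))"
    unfolding eq
  proof (rule card_UN_disjoint[OF fin(1)])
    show "\<forall>i\<in>G1. finite (Cons (cutX i G1) ` seqs (cutX i G1) G2)"
      using finite_seqs fin2 by blast
    show "\<forall>i\<in>G1. \<forall>j\<in>G1. i \<noteq> j \<longrightarrow> Cons (cutX i G1) ` seqs (cutX i G1) G2 \<inter> Cons (cutX j G1) ` seqs (cutX j G1) G2 = {}"
      using cutX_inj[OF c2] by blast
  qed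
  also have "\<dots> = (\<Sum>X\<in>G1. card (seqs (cutX X G1) G2))"
    by (rule sum.cong) (auto simp: card_image)
  finally show ?thesis unfolding countST_def seqs_def .
qed



lemma sym_adj: "sym (adj_link G1 G2)"
  unfolding adj_link_def sym_def by blast

lemma class_eq: "sym R \<Longrightarrow> (x, a) \<in> R\<^sup>* \<Longrightarrow> R\<^sup>* `` {x} = R\<^sup>* `` {a}"
  using sym_rtrancl[of R] unfolding sym_def by (meson Image_singleton_iff equalityI rtrancl_trans subsetI)

lemma Union_cutX: "X \<in> G \<Longrightarrow> \<Union>(cutX X G) = \<Union>G"
  by (auto simp: cutX_def)

lemma cut_comps_dist:
  assumes X: "X = {a,b}" "a \<noteq> b" "X \<in> G1"
    and c2: "\<forall>Y\<in>G1. card Y = 2" and c2': "\<forall>Y\<in>G2. card Y \<noteq> 1"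
    and fin: "finite (\<Union>G1)"
    and conn: "(b, a) \<in> (adj_link (cutX X G1) G2)\<^sup>*"
    and sz: "\<forall>S\<in>comps G1 G2. comp_size S \<ge> 2"
  shows "comps (cutX X G1) G2 = comps G1 G2" "dist G1 G2 = Suc (dist (cutX X G1) G2)"
proof -
  let ?G = "cutX X G1"
  let ?R = "adj_link G1 G2" and ?R' = "adj_link ?G G2"
  have GG: "?G = G1 - {{a,b}} \<union> {{a},{b}}" using X by (simp add: cutX_pair)
  have s1: "?R' \<subseteq> ?R" unfolding adj_link_def GG using X by blast
  have ab: "(a,b) \<in> ?R'\<^sup>*" using conn sym_rtrancl[OF sym_adj] unfolding sym_def by blast
  have s2: "?R \<subseteq> ?R'\<^sup>*"
  proof
    fix p assume "p \<in> ?R"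
    then obtain x y Z where p: "p = (x,y)" "Z \<in> G1 \<union> G2" "x \<in> Z" "y \<in> Z" unfolding adj_link_def by blast
    show "p \<in> ?R'\<^sup>*"
    proof (cases "Z = {a,b}")
      case True
      then have "x \<in> {a,b}" "y \<in> {a,b}" using p by auto
      then show ?thesis using p ab conn by auto
    next
      case False
      then have "Z \<in> ?G \<union> G2" using p(2) GG by auto
      then show ?thesis using p unfolding adj_link_def by blast
    qed
  qed
  have RR: "?R'\<^sup>* = ?R\<^sup>*" using rtrancl_subset[OF s1 s2] by simp
  show cc: "comps ?G G2 = comps G1 G2"
    unfolding comps_def RR Union_cutX[OF X(3)] ..
  let ?CS = "comps G1 G2"
  let ?S0 = "?R\<^sup>* `` {a}"
  have aU: "a \<in> \<Union>G1" using X by blast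
  have S0: "?S0 \<in> ?CS" unfolding comps_def using aU by blast
  have finCS: "finite ?CS" unfolding comps_def using fin by simp
  have memS: "S \<in> ?CS \<Longrightarrow> (a \<in> S \<or> b \<in> S) = (S = ?S0)" for S
  proof -
    assume "S \<in> ?CS"
    then obtain x where x: "S = ?R\<^sup>* `` {x}" unfolding comps_def by blast
    have abR: "(a,b) \<in> ?R\<^sup>*" using ab RR by simp
    have eb: "?R\<^sup>* `` {b} = ?S0" using class_eq[OF sym_adj] abR sym_rtrancl[OF sym_adj]
      unfolding sym_def by blast
    show ?thesis
    proof
      assume "a \<in> S \<or> b \<in> S"
      then show "S = ?S0"
      proof
        assume "a \<in> S" then have "(x,a) \<in> ?R\<^sup>*" using x by simp
        then show ?thesis using x class_eq[OF sym_adj] by blast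
      next
        assume "b \<in> S" then have "(x,b) \<in> ?R\<^sup>*" using x by simp
        then show ?thesis using x class_eq[OF sym_adj] eb by blast
      qed
    next
      assume "S = ?S0" then show "a \<in> S \<or> b \<in> S" by auto
    qed
  qed
  have tel1: "telos G1 S = {}" for S using c2 unfolding telos_def by auto
  have tel2: "telos G2 S = {}" for S using c2' unfolding telos_def by auto
  have telG: "(telos ?G S = {}) = (a \<notin> S \<and> b \<notin> S)" for S
  proof -
    have "telos ?G S = {Y \<in> {{a},{b}}. Y \<subseteq> S}" unfolding telos_def GG using c2 by auto
    then show ?thesis by auto
  qed
  have nt1: "{S \<in> ?CS. trivial_crown G1 G2 S} = {}"
    using sz by (auto simp: trivial_crown_def)
  have nt2: "{S \<in> ?CS. trivial_crown ?G G2 S} = {}"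
    using sz by (auto simp: trivial_crown_def)
  have n1: "{S \<in> ?CS. nontrivial_crown G1 G2 S} = ?CS"
    using sz by (auto simp: nontrivial_crown_def is_crown_def tel1 tel2)
  have n2: "{S \<in> ?CS. nontrivial_crown ?G G2 S} = ?CS - {?S0}"
    using sz memS by (auto simp: nontrivial_crown_def is_crown_def telG tel2)
  have "card ?CS \<ge> 1" using S0 finCS by (metis One_nat_def Suc_leI card_gt_0_iff empty_iff)
  then show "dist G1 G2 = Suc (dist ?G G2)"
    unfolding dist_def cc nt1 nt2 n1 n2 using S0 finCS by simp
qed



lemma crown1_img: "crown1 off k = (\<lambda>i. {off + 2*i, off + 2*i + 1}) ` {..<k}"
  unfolding crown1_def by auto

lemma crown2_img: "crown2 off k = (\<lambda>i. {off + 2*i + 1, off + (2*i + 2) mod (2*k)}) ` {..<k}"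
  unfolding crown2_def by auto

lemma W1_img: "W1 off w = {{off}, {off + 2*w - 1}} \<union> (\<lambda>i. {off + 2*i - 1, off + 2*i}) ` {1..<w}"
  unfolding W1_def by auto

lemma W2_img: "W2 off w = (\<lambda>i. {off + 2*i, off + 2*i + 1}) ` {..<w}"
  unfolding W2_def by auto

lemma crowns1_app: "crowns1 off (xs @ ys) = crowns1 off xs \<union> crowns1 (off + 2 * sum_list xs) ys"
  by (induction xs arbitrary: off) (auto simp: algebra_simps)

lemma crowns2_app: "crowns2 off (xs @ ys) = crowns2 off xs \<union> crowns2 (off + 2 * sum_list xs) ys"
  by (induction xs arbitrary: off) (auto simp: algebra_simps)

lemma crowns1_range: "X \<in> crowns1 off xs \<Longrightarrow> x \<in> X \<Longrightarrow> off \<le> x \<and> x < off + 2 * sum_list xs"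
proof (induction xs arbitrary: off)
  case Nil then show ?case by simp
next
  case (Cons k ks)
  show ?case
  proof (cases "X \<in> crown1 off k")
    case True then show ?thesis using Cons.prems by (auto simp: crown1_img)
  next
    case False
    then have "X \<in> crowns1 (off + 2*k) ks" using Cons.prems by simp
    then show ?thesis using Cons.IH[of "off + 2*k"] Cons.prems by auto
  qed
qed

lemma crowns2_range: "X \<in> crowns2 off xs \<Longrightarrow> x \<in> X \<Longrightarrow> off \<le> x \<and> x < off + 2 * sum_list xs"
proof (induction xs arbitrary: off)
  case Nil then show ?case by simp
next
  case (Cons k ks)
  show ?case
  proof (cases "X \<in> crown2 off k")
    case True
    then obtain i where i: "i < k" "X = {off + 2*i + 1, off + (2*i + 2) mod (2*k)}" by (auto simp: crown2_img)
    have "(2*i + 2) mod (2*k) < 2*k" using i(1) by simp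
    then have "x < off + 2*k" using Cons.prems(2) i by auto
    moreover have "off \<le> x" using Cons.prems(2) i(2) by auto
    ultimately show ?thesis by simp
  next
    case False
    then have "X \<in> crowns2 (off + 2*k) ks" using Cons.prems by simp
    then show ?thesis using Cons.IH[of "off + 2*k"] Cons.prems by auto
  qed
qed

lemma ren_cong: "(\<And>X x. X \<in> G \<Longrightarrow> x \<in> X \<Longrightarrow> f x = g x) \<Longrightarrow> ren f G = ren g G"
  unfolding ren_def by (rule image_cong) (auto intro: image_cong)

lemma ren_id: "ren (\<lambda>x. x) G = G" by (simp add: ren_def)

lemma crown1_shift: "ren (\<lambda>x. x + s) (crown1 off k) = crown1 (off + s) k"
  unfolding crown1_img ren_def image_image by (rule image_cong) (auto simp: algebra_simps)

lemma crown2_shift: "ren (\<lambda>x. x + s) (crown2 off k) = crown2 (off + s) k"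
  unfolding crown2_img ren_def image_image by (rule image_cong) (auto simp: algebra_simps)

lemma crowns1_shift: "ren (\<lambda>x. x + s) (crowns1 off xs) = crowns1 (off + s) xs"
  by (induction xs arbitrary: off) (simp_all add: ren_Un ren_empty crown1_shift ac_simps)

lemma crowns2_shift: "ren (\<lambda>x. x + s) (crowns2 off xs) = crowns2 (off + s) xs"
  by (induction xs arbitrary: off) (simp_all add: ren_Un ren_empty crown2_shift ac_simps)

lemma crowns1_fin: "finite (crowns1 off xs)"
  by (induction xs arbitrary: off) (auto simp: crown1_img)
lemma crowns2_fin: "finite (crowns2 off xs)"
  by (induction xs arbitrary: off) (auto simp: crown2_img)

lemma crowns1_card: "Y \<in> crowns1 off xs \<Longrightarrow> card Y = 2"
  by (induction xs arbitrary: off) (auto simp: crown1_img)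

lemma crowns2_card: "Y \<in> crowns2 off xs \<Longrightarrow> card Y = 2"
proof (induction xs arbitrary: off)
  case Nil then show ?case by simp
next
  case (Cons k ks)
  show ?case
  proof (cases "Y \<in> crown2 off k")
    case True
    then obtain i where i: "i < k" "Y = {off + 2*i + 1, off + (2*i + 2) mod (2*k)}" by (auto simp: crown2_img)
    have "(2*i + 2) mod (2*k) = 2 * ((i+1) mod k)" using mult_mod_right[of 2 "i+1" k] by simp
    then have "off + 2*i + 1 \<noteq> off + (2*i + 2) mod (2*k)"
      by (metis add_left_cancel even_add even_mult_iff odd_one dvd_triv_left)
    then show ?thesis using i by simp
  next
    case False then show ?thesis using Cons by simp
  qed
qed



definition piF :: "nat \<Rightarrow> nat \<Rightarrow> nat \<Rightarrow> nat \<Rightarrow> nat" where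
  "piF P k i x = (if x < P then x + 2*k else if x < P + 2*i + 1 then x + 2*k - P - 2*i - 1
     else if x < P + 2*k then x - P - 2*i - 1 else x)"

definition siF :: "nat \<Rightarrow> nat \<Rightarrow> nat \<Rightarrow> nat \<Rightarrow> nat" where
  "siF P k i y = (if y < 2*k - 2*i - 1 then y + P + 2*i + 1 else if y < 2*k then y + P + 2*i + 1 - 2*k
     else if y < P + 2*k then y - 2*k else y)"

lemma pi_si: "i < k \<Longrightarrow> piF P k i (siF P k i y) = y"
  unfolding piF_def siF_def by auto

lemma si_pi: "i < k \<Longrightarrow> siF P k i (piF P k i x) = x"
  unfolding piF_def siF_def by auto

lemma bij_pi: "i < k \<Longrightarrow> bij (piF P k i)"
  by (rule o_bij[of "siF P k i"]) (auto simp: pi_si si_pi fun_eq_iff)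

lemma inj_si: "i < k \<Longrightarrow> inj (siF P k i)"
  by (metis injI pi_si)

lemma piF_v1: "i < k \<Longrightarrow> x < 2*k \<Longrightarrow> 2*i+1 \<le> x \<Longrightarrow> piF P k i (P + x) = x - 2*i - 1"
  unfolding piF_def by simp
lemma piF_v2: "i < k \<Longrightarrow> x < 2*i+1 \<Longrightarrow> piF P k i (P + x) = x + 2*k - 2*i - 1"
  unfolding piF_def by simp

lemma M1:
  assumes ik: "i < k"
  shows "ren (piF P k i) (crown1 P k - {{P+2*i, P+2*i+1}} \<union> {{P+2*i},{P+2*i+1}}) = W1 0 k"
proof -
  let ?p = "piF P k i"
  let ?n = "\<lambda>m. if m > i then m - i else m + k - i"
  have c: "crown1 P k - {{P+2*i, P+2*i+1}} = (\<lambda>m. {P+2*m, P+2*m+1}) ` ({..<k} - {i})"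
  proof -
    have inj: "{P+2*m, P+2*m+1} = {P+2*i, P+2*i+1} \<Longrightarrow> m = i" for m
    proof -
      assume "{P+2*m, P+2*m+1} = {P+2*i, P+2*i+1}"
      then have "P+2*m \<in> {P+2*i, P+2*i+1}" by blast
      then show "m = i" by auto
    qed
    show ?thesis unfolding crown1_img using inj by blast
  qed
  have r1: "ren ?p ((\<lambda>m. {P+2*m, P+2*m+1}) ` ({..<k} - {i})) = (\<lambda>n. {2*n - 1, 2*n}) ` (?n ` ({..<k} - {i}))"
    unfolding ren_def image_image
  proof (rule image_cong)
    fix m assume "m \<in> {..<k} - {i}"
    then have m: "m < k" "m \<noteq> i" by auto
    have e: "?p ` {P+2*m, P+2*m+1} = {?p (P + 2*m), ?p (P + (2*m+1))}" by simp
    show "?p ` {P+2*m, P+2*m+1} = {2 * ?n m - 1, 2 * ?n m}"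
    proof (cases "m > i")
      case True
      have v1: "?p (P + 2*m) = 2*m - 2*i - 1" using piF_v1[of i k "2*m" P] True m ik by simp
      have v2: "?p (P + (2*m+1)) = 2*m + 1 - 2*i - 1" using piF_v1[of i k "2*m+1" P] True m ik by simp
      show ?thesis unfolding e using v1 v2 True by (simp add: algebra_simps)
    next
      case False
      then have mi: "m < i" using m by simp
      have v1: "?p (P + 2*m) = 2*m + 2*k - 2*i - 1" using piF_v2[of i k "2*m" P] mi ik by simp
      have v2: "?p (P + (2*m+1)) = 2*m + 1 + 2*k - 2*i - 1" using piF_v2[of i k "2*m+1" P] mi ik by simp
      show ?thesis unfolding e using v1 v2 mi False by (simp add: algebra_simps)
    qed
  qed simp
  have r2: "?n ` ({..<k} - {i}) = {1..<k}"
  proof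
    show "?n ` ({..<k} - {i}) \<subseteq> {1..<k}" using ik by auto
    show "{1..<k} \<subseteq> ?n ` ({..<k} - {i})"
    proof
      fix n assume n: "n \<in> {1..<k}"
      show "n \<in> ?n ` ({..<k} - {i})"
      proof (cases "n + i < k")
        case True
        then have h1: "n = ?n (n+i)" and h2: "n + i \<in> {..<k} - {i}" using n by auto
        show ?thesis by (rule image_eqI[where f = ?n, OF h1 h2])
      next
        case False
        then have h1: "n = ?n (n+i-k)" and h2: "n + i - k \<in> {..<k} - {i}" using n ik by auto
        show ?thesis by (rule image_eqI[where f = ?n, OF h1 h2])
      qed
    qed
  qed
  have r3: "ren ?p {{P+2*i},{P+2*i+1}} = {{0}, {0 + 2*k - 1}}"
  proof -
    have "?p (P + 2*i) = 2*k - 1" using ik piF_v2[of i k "2*i" P] by simp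
    moreover have "?p (P + (2*i+1)) = 0" using ik piF_v1[of i k "2*i+1" P] by simp
    ultimately show ?thesis by (simp add: ren_def insert_commute)
  qed
  show ?thesis
    unfolding ren_Un c r1 r2 r3 W1_img by auto
qed

lemma M2:
  assumes ik: "i < k"
  shows "ren (piF P k i) (crown2 P k) = W2 0 k"
proof -
  let ?p = "piF P k i"
  let ?q = "\<lambda>m. if m \<ge> i then m - i else m + k - i"
  have r1: "ren ?p (crown2 P k) = (\<lambda>n. {0 + 2*n, 0 + 2*n + 1}) ` (?q ` {..<k})"
    unfolding ren_def image_image crown2_img
  proof (rule image_cong)
    fix m assume m: "m \<in> {..<k}"
    show "?p ` {P + 2*m + 1, P + (2*m + 2) mod (2*k)} = {0 + 2 * ?q m, 0 + 2 * ?q m + 1}"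
    proof (cases "m = k - 1")
      case True
      then have "2*m + 2 = 2*k" using ik by simp
      then have "(2*m + 2) mod (2*k) = 0" by simp
      moreover have "?p (P + (2*m+1)) = 2 * ?q m" using ik True piF_v1[of i k "2*m+1" P] by (simp add: diff_mult_distrib2)
      moreover have "?p (P + 0) = 2 * ?q m + 1" using ik True piF_v2[of i k 0 P] by (simp add: diff_mult_distrib2; arith)
      ultimately show ?thesis by (simp add: add.assoc)
    next
      case False
      then have mk: "2*m+2 < 2*k" using m by simp
      then have "(2*m + 2) mod (2*k) = 2*m+2" by simp
      moreover have "?p (P + (2*m+1)) = 2 * ?q m \<and> ?p (P + (2*m+2)) = 2 * ?q m + 1"
      proof (cases "m \<ge> i")
        case True then show ?thesis using ik mk piF_v1[of i k "2*m+1" P] piF_v1[of i k "2*m+2" P] by (simp; arith)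
      next
        case False then show ?thesis using ik mk piF_v2[of i k "2*m+1" P] piF_v2[of i k "2*m+2" P] by (simp; arith)
      qed
      ultimately show ?thesis by (simp add: add.assoc)
    qed
  qed simp
  have r2: "?q ` {..<k} = {..<k}"
  proof
    show "?q ` {..<k} \<subseteq> {..<k}" using ik by auto
    show "{..<k} \<subseteq> ?q ` {..<k}"
    proof
      fix n assume n: "n \<in> {..<k}"
      show "n \<in> ?q ` {..<k}"
      proof (cases "n + i < k")
        case True
        then have h1: "n = ?q (n+i)" and h2: "n + i \<in> {..<k}" using n by auto
        show ?thesis by (rule image_eqI[where f = ?q, OF h1 h2])
      next
        case False
        then have h1: "n = ?q (n+i-k)" and h2: "n + i - k \<in> {..<k}" using n ik by auto
        show ?thesis by (rule image_eqI[where f = ?q, OF h1 h2])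
      qed
    qed
  qed
  show ?thesis unfolding r1 r2 W2_img ..
qed

lemma E1:
  assumes "i < k" "P = 2 * sum_list A"
  shows "ren (piF P k i) (crowns1 0 A) = crowns1 (2*k) A"
        "ren (piF P k i) (crowns2 0 A) = crowns2 (2*k) A"
proof -
  have "ren (piF P k i) (crowns1 0 A) = ren (\<lambda>x. x + 2*k) (crowns1 0 A)"
    by (rule ren_cong) (use crowns1_range assms in \<open>fastforce simp: piF_def\<close>)
  then show "ren (piF P k i) (crowns1 0 A) = crowns1 (2*k) A" by (simp add: crowns1_shift)
  have "ren (piF P k i) (crowns2 0 A) = ren (\<lambda>x. x + 2*k) (crowns2 0 A)"
    by (rule ren_cong) (use crowns2_range assms in \<open>fastforce simp: piF_def\<close>)
  then show "ren (piF P k i) (crowns2 0 A) = crowns2 (2*k) A" by (simp add: crowns2_shift)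
qed

lemma E2:
  assumes "i < k"
  shows "ren (piF P k i) (crowns1 (P + 2*k) B) = crowns1 (P + 2*k) B"
        "ren (piF P k i) (crowns2 (P + 2*k) B) = crowns2 (P + 2*k) B"
proof -
  have "ren (piF P k i) (crowns1 (P+2*k) B) = ren (\<lambda>x. x) (crowns1 (P+2*k) B)"
    by (rule ren_cong) (use crowns1_range assms in \<open>fastforce simp: piF_def\<close>)
  then show "ren (piF P k i) (crowns1 (P + 2*k) B) = crowns1 (P + 2*k) B" by (simp add: ren_id)
  have "ren (piF P k i) (crowns2 (P+2*k) B) = ren (\<lambda>x. x) (crowns2 (P+2*k) B)"
    by (rule ren_cong) (use crowns2_range assms in \<open>fastforce simp: piF_def\<close>)
  then show "ren (piF P k i) (crowns2 (P + 2*k) B) = crowns2 (P + 2*k) B" by (simp add: ren_id)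
qed



definition PO :: "nat list \<Rightarrow> nat \<Rightarrow> nat" where "PO L j = 2 * sum_list (take j L)"

lemma crowns_split:
  assumes "j < length L"
  shows "crowns1 0 L = crowns1 0 (take j L) \<union> (crown1 (PO L j) (L!j) \<union> crowns1 (PO L j + 2*(L!j)) (drop (Suc j) L))"
        "crowns2 0 L = crowns2 0 (take j L) \<union> (crown2 (PO L j) (L!j) \<union> crowns2 (PO L j + 2*(L!j)) (drop (Suc j) L))"
proof -
  have e: "take j L @ L!j # drop (Suc j) L = L" using id_take_nth_drop[OF assms] by simp
  have "crowns1 0 (take j L @ L!j # drop (Suc j) L) = crowns1 0 (take j L) \<union> (crown1 (PO L j) (L!j) \<union> crowns1 (PO L j + 2*(L!j)) (drop (Suc j) L))"
    by (simp add: crowns1_app PO_def)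
  then show "crowns1 0 L = crowns1 0 (take j L) \<union> (crown1 (PO L j) (L!j) \<union> crowns1 (PO L j + 2*(L!j)) (drop (Suc j) L))"
    by (simp only: e)
  have "crowns2 0 (take j L @ L!j # drop (Suc j) L) = crowns2 0 (take j L) \<union> (crown2 (PO L j) (L!j) \<union> crowns2 (PO L j + 2*(L!j)) (drop (Suc j) L))"
    by (simp add: crowns2_app PO_def)
  then show "crowns2 0 L = crowns2 0 (take j L) \<union> (crown2 (PO L j) (L!j) \<union> crowns2 (PO L j + 2*(L!j)) (drop (Suc j) L))"
    by (simp only: e)
qed

lemma key:
  assumes j: "j < length L" and i: "i < L!j"
  defines "P \<equiv> PO L j" and "k \<equiv> L!j"
  shows "ren (piF P k i) (cutX {P+2*i, P+2*i+1} (crowns1 0 L)) = W1 0 k \<union> crowns1 (2*k) (take j L @ drop (Suc j) L)"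
        "ren (piF P k i) (crowns2 0 L) = W2 0 k \<union> crowns2 (2*k) (take j L @ drop (Suc j) L)"
proof -
  let ?A = "take j L" and ?B = "drop (Suc j) L" and ?X = "{P+2*i, P+2*i+1}"
  have ik: "i < k" using i by (simp add: k_def)
  have PA: "P = 2 * sum_list ?A" by (simp add: P_def PO_def)
  have s1: "crowns1 0 L = crowns1 0 ?A \<union> (crown1 P k \<union> crowns1 (P + 2*k) ?B)"
    using crowns_split(1)[OF j] by (simp add: P_def k_def)
  have s2: "crowns2 0 L = crowns2 0 ?A \<union> (crown2 P k \<union> crowns2 (P + 2*k) ?B)"
    using crowns_split(2)[OF j] by (simp add: P_def k_def)
  have nA: "?X \<notin> crowns1 0 ?A"
  proof
    assume "?X \<in> crowns1 0 ?A"
    from crowns1_range[OF this, of "P+2*i"] PA show False by simp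
  qed
  have nB: "?X \<notin> crowns1 (P + 2*k) ?B"
  proof
    assume "?X \<in> crowns1 (P + 2*k) ?B"
    from crowns1_range[OF this, of "P+2*i"] ik show False by simp
  qed
  have cX: "cutX ?X (crowns1 0 L) = crowns1 0 ?A \<union> ((crown1 P k - {?X} \<union> {{P+2*i},{P+2*i+1}}) \<union> crowns1 (P + 2*k) ?B)"
    unfolding s1 cutX_def using nA nB by auto
  have app1: "crowns1 (2*k) (?A @ ?B) = crowns1 (2*k) ?A \<union> crowns1 (P + 2*k) ?B"
    by (simp add: crowns1_app PA ac_simps)
  have app2: "crowns2 (2*k) (?A @ ?B) = crowns2 (2*k) ?A \<union> crowns2 (P + 2*k) ?B"
    by (simp add: crowns2_app PA ac_simps)
  show "ren (piF P k i) (cutX ?X (crowns1 0 L)) = W1 0 k \<union> crowns1 (2*k) (?A @ ?B)"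
    unfolding cX ren_Un[of "piF P k i" "crowns1 0 ?A"]
      ren_Un[of "piF P k i" "crown1 P k - {?X} \<union> {{P+2*i},{P+2*i+1}}" "crowns1 (P + 2*k) ?B"]
      E1(1)[OF ik PA] E2(1)[OF ik] M1[OF ik] app1 by blast
  show "ren (piF P k i) (crowns2 0 L) = W2 0 k \<union> crowns2 (2*k) (?A @ ?B)"
    unfolding s2 ren_Un[of "piF P k i" "crowns2 0 ?A"]
      ren_Un[of "piF P k i" "crown2 P k" "crowns2 (P + 2*k) ?B"]
      E1(2)[OF ik PA] E2(2)[OF ik] M2[OF ik] app2 by blast
qed

lemma Wpath:
  assumes "W1 0 k \<subseteq> H1" "W2 0 k \<subseteq> H2"
  shows "t < 2*k \<Longrightarrow> (0, t) \<in> (adj_link H1 H2)\<^sup>*"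
proof (induction t)
  case 0 then show ?case by simp
next
  case (Suc t)
  have "(t, Suc t) \<in> adj_link H1 H2"
  proof (cases "odd t")
    case True
    then obtain n where n: "t = 2*n + 1" by (metis oddE)
    have m: "n+1 \<in> {1..<k}" using Suc.prems n by auto
    have "{0 + 2*(n+1) - 1, 0 + 2*(n+1)} \<in> (\<lambda>i. {0 + 2*i - 1, 0 + 2*i}) ` {1..<k}" using m by (rule imageI)
    then have "{0 + 2*(n+1) - 1, 0 + 2*(n+1)} \<in> W1 0 k" unfolding W1_img by (rule UnI2)
    then have "{t, Suc t} \<in> H1" using assms(1) n by auto
    then show ?thesis unfolding adj_link_def by blast
  next
    case False
    then obtain n where n: "t = 2*n" by (metis evenE)
    have m: "n \<in> {..<k}" using Suc.prems n by auto
    have "{0 + 2*n, 0 + 2*n + 1} \<in> W2 0 k" unfolding W2_img using m by (rule imageI)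
    then have "{t, Suc t} \<in> H2" using assms(2) n by auto
    then show ?thesis unfolding adj_link_def by blast
  qed
  then show ?case using Suc by (meson Suc_lessD rtrancl.rtrancl_into_rtrancl)
qed



lemma crowns1_UN: "crowns1 off L = (\<Union>j<length L. crown1 (off + 2 * sum_list (take j L)) (L!j))"
proof (induction L arbitrary: off)
  case Nil then show ?case by simp
next
  case (Cons k ks)
  show ?case
    unfolding length_Cons lessThan_Suc_eq_insert_0 UN_insert image_image
    by (simp add: Cons.IH ac_simps)
qed

lemma PO_Suc: "j < length L \<Longrightarrow> PO L (Suc j) = PO L j + 2 * L!j"
  by (simp add: PO_def take_Suc_conv_app_nth)

lemma PO_mono: "j \<le> j' \<Longrightarrow> PO L j \<le> PO L j'"
proof -
  assume "j \<le> j'"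
  then obtain d where "j' = j + d" using le_Suc_ex by blast
  then show ?thesis unfolding PO_def
    by (simp add: take_add)
qed

lemma crown1_range: "X \<in> crown1 off k \<Longrightarrow> x \<in> X \<Longrightarrow> off \<le> x \<and> x < off + 2*k"
  by (auto simp: crown1_img)

lemma crowns_disj:
  assumes "j < length L" "j' < length L" "j \<noteq> j'"
  shows "crown1 (PO L j) (L!j) \<inter> crown1 (PO L j') (L!j') = {}"
proof (rule ccontr)
  assume "crown1 (PO L j) (L!j) \<inter> crown1 (PO L j') (L!j') \<noteq> {}"
  then obtain X where X: "X \<in> crown1 (PO L j) (L!j)" "X \<in> crown1 (PO L j') (L!j')" by blast
  then obtain x where x: "x \<in> X" by (auto simp: crown1_img)
  have r1: "PO L j \<le> x \<and> x < PO L j + 2*(L!j)" by (rule crown1_range[OF X(1) x])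
  have r2: "PO L j' \<le> x \<and> x < PO L j' + 2*(L!j')" by (rule crown1_range[OF X(2) x])
  show False
  proof (cases "j < j'")
    case True
    then have "PO L (Suc j) \<le> PO L j'" by (simp add: PO_mono)
    then show False using r1 r2 PO_Suc[OF assms(1)] by simp
  next
    case False
    then have "j' < j" using assms(3) by simp
    then have "PO L (Suc j') \<le> PO L j" by (simp add: PO_mono)
    then show False using r1 r2 PO_Suc[OF assms(2)] by simp
  qed
qed

lemma adj_cut_sub: "X \<in> G1 \<Longrightarrow> adj_link (cutX X G1) G2 \<subseteq> adj_link G1 G2"
  unfolding adj_link_def cutX_def by blast

lemma Image_fin: "finite (\<Union>(G1 \<union> G2)) \<Longrightarrow> finite ((adj_link G1 G2)\<^sup>* `` {x})"
proof -
  assume f: "finite (\<Union>(G1 \<union> G2))"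
  have "(adj_link G1 G2)\<^sup>* `` {x} \<subseteq> insert x (\<Union>(G1 \<union> G2))"
  proof
    fix y assume "y \<in> (adj_link G1 G2)\<^sup>* `` {x}"
    then have "(x, y) \<in> (adj_link G1 G2)\<^sup>*" by simp
    then show "y \<in> insert x (\<Union>(G1 \<union> G2))"
      by (cases rule: rtrancl.cases) (auto simp: adj_link_def)
  qed
  then show ?thesis using f by (meson finite_insert finite_subset)
qed

locale cset =
  fixes L :: "nat list"
  assumes ge2: "\<forall>x\<in>set L. x \<ge> 2" and ne: "L \<noteq> []"
begin

abbreviation "G1 \<equiv> crowns1 0 L"
abbreviation "G2 \<equiv> crowns2 0 L"

lemma G1_UN: "G1 = (\<Union>j<length L. crown1 (PO L j) (L!j))"
  unfolding crowns1_UN PO_def by simp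

lemma in_G1: "X \<in> G1 \<Longrightarrow> \<exists>j<length L. \<exists>i<L!j. X = {PO L j + 2*i, PO L j + 2*i + 1}"
  unfolding G1_UN crown1_img by blast

lemma pair_in_G1: "j < length L \<Longrightarrow> i < L!j \<Longrightarrow> {PO L j + 2*i, PO L j + 2*i + 1} \<in> G1"
  unfolding G1_UN crown1_img by blast

lemma path:
  assumes j: "j < length L" and i: "i < L!j"
  defines "P \<equiv> PO L j" and "k \<equiv> L!j"
  shows "(P+2*i+1, P+2*i) \<in> (adj_link (cutX {P+2*i, P+2*i+1} G1) G2)\<^sup>*"
        "siF P k i ` {..<2*k} \<subseteq> (adj_link (cutX {P+2*i, P+2*i+1} G1) G2)\<^sup>* `` {P+2*i+1}"
proof -
  let ?p = "piF P k i" and ?G = "cutX {P+2*i, P+2*i+1} G1"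
  have ik: "i < k" using i by (simp add: k_def)
  have b: "bij ?p" by (rule bij_pi[OF ik])
  have h1: "ren ?p ?G = W1 0 k \<union> crowns1 (2*k) (take j L @ drop (Suc j) L)"
    using key(1)[OF j i] by (simp add: P_def k_def)
  have h2: "ren ?p G2 = W2 0 k \<union> crowns2 (2*k) (take j L @ drop (Suc j) L)"
    using key(2)[OF j i] by (simp add: P_def k_def)
  have al: "adj_link (W1 0 k \<union> crowns1 (2*k) (take j L @ drop (Suc j) L)) (W2 0 k \<union> crowns2 (2*k) (take j L @ drop (Suc j) L))
      = map_prod ?p ?p ` adj_link ?G G2"
    using adj_link_ren[of ?p ?G G2] h1 h2 by simp
  have wp: "t < 2*k \<Longrightarrow> (0, t) \<in> (map_prod ?p ?p ` adj_link ?G G2)\<^sup>*" for t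
    using Wpath[of k, OF Un_upper1 Un_upper1] al by metis
  have pb: "?p (P + 2*i + 1) = 0" using piF_v1[of i k "2*i+1" P] ik by simp
  have pa: "?p (P + 2*i) = 2*k - 1" using piF_v2[of i k "2*i" P] ik by simp
  have "(?p (P+2*i+1), ?p (P+2*i)) \<in> (map_prod ?p ?p ` adj_link ?G G2)\<^sup>*"
    unfolding pb pa using wp ik by simp
  then show "(P+2*i+1, P+2*i) \<in> (adj_link ?G G2)\<^sup>*"
    using rtrancl_map_iff[OF bij_is_inj[OF b]] by blast
  show "siF P k i ` {..<2*k} \<subseteq> (adj_link ?G G2)\<^sup>* `` {P+2*i+1}"
  proof
    fix y assume "y \<in> siF P k i ` {..<2*k}"
    then obtain t where t: "t < 2*k" "y = siF P k i t" by auto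
    then have "?p y = t" by (simp add: pi_si[OF ik])
    then have "(?p (P+2*i+1), ?p y) \<in> (map_prod ?p ?p ` adj_link ?G G2)\<^sup>*"
      unfolding pb using wp t by simp
    then show "y \<in> (adj_link ?G G2)\<^sup>* `` {P+2*i+1}"
      using rtrancl_map_iff[OF bij_is_inj[OF b]] by blast
  qed
qed

lemma finG1: "finite G1" by (rule crowns1_fin)
lemma finU1: "finite (\<Union>G1)"
  using finG1 crowns1_card by (metis card.infinite finite_Union zero_neq_numeral)
lemma finU2: "finite (\<Union>G2)"
  using crowns2_fin crowns2_card by (metis card.infinite finite_Union zero_neq_numeral)

lemma sz: "\<forall>S\<in>comps G1 G2. comp_size S \<ge> 2"
proof
  fix S assume "S \<in> comps G1 G2"
  then obtain x where x: "x \<in> \<Union>G1" "S = (adj_link G1 G2)\<^sup>* `` {x}" unfolding comps_def by blast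
  then obtain X where X: "X \<in> G1" "x \<in> X" by blast
  then obtain j i where ji: "j < length L" "i < L!j" "X = {PO L j + 2*i, PO L j + 2*i + 1}"
    using in_G1 by blast
  let ?P = "PO L j" and ?k = "L!j"
  have "siF ?P ?k i ` {..<2*?k} \<subseteq> (adj_link (cutX X G1) G2)\<^sup>* `` {?P+2*i+1}"
    using path(2)[OF ji(1,2)] ji(3) by simp
  also have "\<dots> \<subseteq> (adj_link G1 G2)\<^sup>* `` {?P+2*i+1}"
    using rtrancl_mono[OF adj_cut_sub[OF X(1), of G2]] by blast
  also have "\<dots> \<subseteq> S"
  proof -
    have "(x, ?P+2*i+1) \<in> adj_link G1 G2" using X ji(3) unfolding adj_link_def by blast
    then show ?thesis using x(2) by (meson Image_singleton_iff r_into_rtrancl rtrancl_trans subsetI)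
  qed
  finally have sub: "siF ?P ?k i ` {..<2*?k} \<subseteq> S" .
  have "card (siF ?P ?k i ` {..<2*?k}) = 2*?k"
    using card_image[OF inj_on_subset[OF inj_si[OF ji(2)] subset_UNIV]] by simp
  moreover have "finite S" using x(2) Image_fin finU1 finU2 by simp
  ultimately have "card S \<ge> 2*?k" using sub by (metis card_mono)
  moreover have "?k \<ge> 2" using ge2 ji(1) by simp
  ultimately show "comp_size S \<ge> 2" unfolding comp_size_def by linarith
qed

lemma hc:
  assumes "X \<in> G1"
  shows "comps (cutX X G1) G2 = comps G1 G2 \<and> dist G1 G2 = Suc (dist (cutX X G1) G2)"
proof -
  obtain j i where ji: "j < length L" "i < L!j" "X = {PO L j + 2*i, PO L j + 2*i + 1}"
    using in_G1[OF assms] by blast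
  have c2: "\<forall>Y\<in>G1. card Y = 2" using crowns1_card by blast
  have c2': "\<forall>Y\<in>G2. card Y \<noteq> 1" using crowns2_card by fastforce
  have conn: "(PO L j + 2*i + 1, PO L j + 2*i) \<in> (adj_link (cutX X G1) G2)\<^sup>*"
    using path(1)[OF ji(1,2)] ji(3) by simp
  show ?thesis
    using cut_comps_dist[OF ji(3) _ assms c2 c2' finU1 conn sz] by simp
qed

end



lemma card_crown1: "card (crown1 off k) = k"
proof -
  have "inj_on (\<lambda>i. {off + 2*i, off + 2*i + 1}) {..<k}"
    by (rule inj_onI) (auto simp: doubleton_eq_iff)
  then show ?thesis unfolding crown1_img by (simp add: card_image)
qed

context cset
begin

lemma term_eq:
  assumes srt: "sorted L" and j: "j < length L" and i: "i < L!j"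
  shows "countST (cutX {PO L j + 2*i, PO L j + 2*i + 1} G1) G2 = ST_W (mset L - {#L!j#}) (L!j)"
proof -
  let ?P = "PO L j" and ?k = "L!j" and ?A = "take j L" and ?B = "drop (Suc j) L"
  let ?G = "cutX {?P + 2*i, ?P + 2*i + 1} G1"
  have ik: "i < ?k" using i .
  have e: "L = ?A @ ?k # ?B" using id_take_nth_drop[OF j] .
  have ms: "mset L - {#?k#} = mset (?A @ ?B)"
    by (subst e) simp
  have "sorted (?A @ ?k # ?B)" using srt e by simp
  then have so: "sorted (?A @ ?B)" by (simp add: sorted_append)
  have "sorted_list_of_multiset (mset (?A @ ?B)) = sort (?A @ ?B)" by (rule sorted_list_of_multiset_mset)
  also have "\<dots> = ?A @ ?B" by (rule sorted_sort_id[OF so])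
  finally have sl: "sorted_list_of_multiset (mset L - {#?k#}) = ?A @ ?B" unfolding ms .
  have "countST ?G G2 = countST (ren (piF ?P ?k i) ?G) (ren (piF ?P ?k i) G2)"
    using countST_ren[OF bij_pi[OF ik]] by simp
  also have "\<dots> = countST (W1 0 ?k \<union> crowns1 (2*?k) (?A @ ?B)) (W2 0 ?k \<union> crowns2 (2*?k) (?A @ ?B))"
    using key[OF j i] by simp
  also have "\<dots> = ST_W (mset L - {#?k#}) ?k"
    unfolding ST_W_def sl by simp
  finally show ?thesis .
qed

lemma main_sum:
  assumes srt: "sorted L"
  shows "countST G1 G2 = (\<Sum>c\<in>#mset L. c * ST_W (mset L - {#c#}) c)"
proof -
  let ?F = "\<lambda>X. countST (cutX X G1) G2"
  let ?h = "\<lambda>c. c * ST_W (mset L - {#c#}) c"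
  have c2: "\<forall>Y\<in>G1. card Y = 2" using crowns1_card by blast
  have G1ne: "G1 \<noteq> {}"
  proof -
    have "0 < length L" using ne by simp
    moreover have "L!0 \<in> set L" using ne by simp
    then have "0 < L!0" using ge2 by fastforce
    ultimately show ?thesis using pair_in_G1[of 0 0] by blast
  qed
  then obtain X0 where "X0 \<in> G1" by blast
  then have d0: "dist G1 G2 \<noteq> 0" using hc by simp
  have "countST G1 G2 = (\<Sum>X\<in>G1. ?F X)"
    by (rule decomp[OF finG1 finU1 c2 d0 hc])
  also have "\<dots> = (\<Sum>j<length L. \<Sum>X\<in>crown1 (PO L j) (L!j). ?F X)"
    unfolding G1_UN
  proof (rule sum.UNION_disjoint)
    show "\<forall>j\<in>{..<length L}. finite (crown1 (PO L j) (L!j))" by (simp add: crown1_img)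
    show "\<forall>j\<in>{..<length L}. \<forall>j'\<in>{..<length L}. j \<noteq> j' \<longrightarrow> crown1 (PO L j) (L!j) \<inter> crown1 (PO L j') (L!j') = {}"
      using crowns_disj by blast
  qed simp
  also have "\<dots> = (\<Sum>j<length L. \<Sum>X\<in>crown1 (PO L j) (L!j). ST_W (mset L - {#L!j#}) (L!j))"
  proof (rule sum.cong[OF refl], rule sum.cong[OF refl])
    fix j X assume j: "j \<in> {..<length L}" and X: "X \<in> crown1 (PO L j) (L!j)"
    then obtain i where i: "i < L!j" "X = {PO L j + 2*i, PO L j + 2*i + 1}" by (auto simp: crown1_img)
    show "?F X = ST_W (mset L - {#L!j#}) (L!j)" using term_eq[OF srt _ i(1)] j i(2) by simp
  qed
  also have "\<dots> = (\<Sum>j<length L. ?h (L!j))"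
    by (simp add: card_crown1)
  also have "\<dots> = sum_list (map ?h L)"
    by (simp add: sum_list_sum_nth atLeast0LessThan)
  also have "\<dots> = (\<Sum>c\<in>#mset L. ?h c)"
    using sum_mset_sum_list[of "map ?h L"] by simp
  finally show ?thesis .
qed

end

theorem mainTheorem6:
  fixes C :: "nat multiset"
  assumes "C \<noteq> {#}"
    and "\<forall>c \<in># C. c \<ge> 2"
  shows "ST_C C = (\<Sum>c \<in># C. c * ST_W (C - {#c#}) c)"
proof -
  let ?L = "sorted_list_of_multiset C"
  have l: "cset ?L"
  proof
    show "\<forall>x\<in>set ?L. 2 \<le> x" using assms(2) by simp
    show "?L \<noteq> []" using assms(1) by (metis mset.simps(1) mset_sorted_list_of_multiset)
  qed
  have "ST_C C = countST (crowns1 0 ?L) (crowns2 0 ?L)" by (simp add: ST_C_def)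
  also have "\<dots> = (\<Sum>c\<in>#mset ?L. c * ST_W (mset ?L - {#c#}) c)"
    by (rule cset.main_sum[OF l]) simp
  finally show ?thesis by simp
qed


end
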